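(* Let $m,n$ be positive integers and $j$ a non-negative integer such that $m\leq n$ and $j<n$. Then \begin{align*} |\mathrm{WHom}^{j}(P_m,P_n)| =&\sum_{t=j+1}^{j+\left\lfloor \frac{m-j-1}{2}\right\rfloor}\ \sum_{s=t-j}^{m-1-t}\left[\binom{m-1}{s,\,t,\,m-1-s-t} - \binom{m-1}{t-j-1,\,s+j+1,\,m-1-s-t}\right]\\ &+\sum_{t=\max\{j-n+m+1,0\}}^{j}\ \sum_{s=0}^{m-1-t}\binom{m-1}{s,\,t,\,m-1-s-t}+\sum_{t=0}^{j-n+m}\ \sum_{s=0}^{n-j-1}\binom{m-1}{s,\,t,\,m-1-s-t}\\ &+\sum_{t=n-j}^{n-j-1+\left\lfloor\frac{j-n+m}{2}\right\rfloor}\ \sum_{s=t-(n-j-1)}^{m-1-t}\left[\binom{m-1}{s,\,t,\,m-1-s-t} - \binom{m-1}{t-n+j,\,s+n-j,\,m-1-s-t}\right]. \end{align*}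
   Context: For a positive integer $n$, $P_n$ denotes the path with vertex set $\{0,1,\dots,n-1\}$ and edge set $\{\{i,i+1\} : i=0,\dots,n-2\}$. A weak homomorphism from a graph $G$ to a graph $H$ is a map $f:V(G)\to V(H)$ such that for every edge $\{x,y\}\in E(G)$, either $f(x)=f(y)$ or $\{f(x),f(y)\}\in E(H)$. $\mathrm{WHom}^{j}(P_m,P_n)$ denotes the set of weak homomorphisms $f:P_m\to P_n$ with $f(0)=j$. The multinomial coefficient $\binom{N}{a,b,c}$ equals $\frac{N!}{a!\,b!\,c!}$ when $a,b,c\ge 0$ and $a+b+c=N$, and is $0$ if any of $a,b,c$ is negative. A sum whose upper limit is smaller than its lower limit is zero. *)

theory Defs
  imports Main "HOL-Library.FuncSet"
begin

definition path_verts :: "nat \<Rightarrow> nat set" where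
  "path_verts n = {0..<n}"

definition path_edges :: "nat \<Rightarrow> nat set set" where
  "path_edges n = {{i, Suc i} | i. Suc i < n}"

text \<open>Weak homomorphism between graphs given by vertex and edge sets;
  maps are taken extensional (undefined outside the vertex set) so that
  they are identified with maps V(G) to V(H).\<close>
definition weak_hom :: "'a set \<Rightarrow> 'a set set \<Rightarrow> 'b set \<Rightarrow> 'b set set \<Rightarrow> ('a \<Rightarrow> 'b) \<Rightarrow> bool" where
  "weak_hom VG EG VH EH f \<longleftrightarrow> f \<in> VG \<rightarrow>\<^sub>E VH \<and>
     (\<forall>x y. {x, y} \<in> EG \<longrightarrow> f x = f y \<or> {f x, f y} \<in> EH)"

definition WHom :: "nat \<Rightarrow> nat \<Rightarrow> nat \<Rightarrow> (nat \<Rightarrow> nat) set" where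
  "WHom j m n = {f. weak_hom (path_verts m) (path_edges m) (path_verts n) (path_edges n) f \<and> f 0 = j}"

definition multinom :: "int \<Rightarrow> int \<Rightarrow> int \<Rightarrow> int \<Rightarrow> int" where
  "multinom N a b c = (if a \<ge> 0 \<and> b \<ge> 0 \<and> c \<ge> 0 \<and> a + b + c = N
     then fact (nat N) div (fact (nat a) * fact (nat b) * fact (nat c)) else 0)"

end

theory Submission
  imports Defs
begin


definition mlt :: "nat \<Rightarrow> nat \<Rightarrow> nat \<Rightarrow> nat" where
  "mlt a b c = fact (a+b+c) div (fact a * fact b * fact c)"

lemma mlt_mult: "mlt a b c * (fact a * fact b * fact c) = fact (a+b+c)"
proof -
  have 1: "fact (a+b+c) = fact a * fact (b+c) * ((a+b+c) choose a)"
    using binomial_fact_lemma[of a "a+b+c"] by (simp add: ac_simps)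
  have 2: "fact (b+c) = fact b * fact c * ((b+c) choose b)"
    using binomial_fact_lemma[of b "b+c"] by (simp add: ac_simps)
  have "fact (a+b+c) = (fact a * fact b * fact c) * (((a+b+c) choose a) * ((b+c) choose b))"
    using 1 2 by (simp add: ac_simps)
  then show ?thesis unfolding mlt_def by (metis div_mult_self1_is_m fact_gt_zero mult.commute mult_pos_pos)
qed

lemma mlt_pascal:
  assumes "a + b + c = Suc k"
  shows "mlt a b c = (if a > 0 then mlt (a-1) b c else 0) + (if b > 0 then mlt a (b-1) c else 0)
     + (if c > 0 then mlt a b (c-1) else 0)"
proof -
  let ?P = "fact a * fact b * fact c :: nat"
  have P0: "?P > 0" by simp
  have A: "(if a > 0 then mlt (a-1) b c else 0) * ?P = a * fact k"
  proof (cases a)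
    case (Suc a')
    then have "mlt a' b c * (fact a' * fact b * fact c) = fact k" using mlt_mult[of a' b c] assms by simp
    then show ?thesis using Suc by (simp add: algebra_simps)
  qed simp
  have B: "(if b > 0 then mlt a (b-1) c else 0) * ?P = b * fact k"
  proof (cases b)
    case (Suc b')
    then have "mlt a b' c * (fact a * fact b' * fact c) = fact k" using mlt_mult[of a b' c] assms by simp
    then show ?thesis using Suc by (simp add: algebra_simps)
  qed simp
  have C: "(if c > 0 then mlt a b (c-1) else 0) * ?P = c * fact k"
  proof (cases c)
    case (Suc c')
    then have "mlt a b c' * (fact a * fact b * fact c') = fact k" using mlt_mult[of a b c'] assms by simp
    then show ?thesis using Suc by (simp add: algebra_simps)
  qed simp
  have "((if a > 0 then mlt (a-1) b c else 0) + (if b > 0 then mlt a (b-1) c else 0)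
     + (if c > 0 then mlt a b (c-1) else 0)) * ?P = (a+b+c) * fact k"
    using A B C by (simp add: algebra_simps)
  also have "\<dots> = fact (a+b+c)" using assms by simp
  also have "\<dots> = mlt a b c * ?P" using mlt_mult by simp
  finally show ?thesis using P0 by (metis mult_right_cancel not_less0 zero_less_iff_neq_zero)
qed

definition Mk :: "nat \<Rightarrow> int \<Rightarrow> int \<Rightarrow> int" where
  "Mk k a b = multinom (int k) a b (int k - a - b)"

lemma multinom_mlt: "multinom N a b c = (if a \<ge> 0 \<and> b \<ge> 0 \<and> c \<ge> 0 \<and> a + b + c = N
     then int (mlt (nat a) (nat b) (nat c)) else 0)"
proof (cases "a \<ge> 0 \<and> b \<ge> 0 \<and> c \<ge> 0 \<and> a + b + c = N")
  case True
  then have e: "nat N = nat a + nat b + nat c" by auto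
  have "multinom N a b c = fact (nat N) div (fact (nat a) * fact (nat b) * fact (nat c))"
    using True unfolding multinom_def by simp
  also have "\<dots> = int (fact (nat N)) div int (fact (nat a) * fact (nat b) * fact (nat c))"
    by (simp only: of_nat_fact of_nat_mult)
  also have "\<dots> = int (fact (nat N) div (fact (nat a) * fact (nat b) * fact (nat c)))"
    by (simp only: zdiv_int)
  finally show ?thesis using True e unfolding mlt_def by simp
next
  case False
  then show ?thesis unfolding multinom_def by auto
qed

lemma Mk_alt: "Mk k a b = (if a \<ge> 0 \<and> b \<ge> 0 \<and> a + b \<le> int k then int (mlt (nat a) (nat b) (nat (int k - a - b))) else 0)"
  unfolding Mk_def multinom_mlt by auto

lemma Mk_zero: "a < 0 \<or> b < 0 \<or> a + b > int k \<Longrightarrow> Mk k a b = 0"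
  unfolding Mk_alt by auto

lemma mlt_sym: "mlt a b c = mlt b a c"
  unfolding mlt_def by (simp add: ac_simps)

lemma Mk_nat: "a + b + c = k \<Longrightarrow> Mk k (int a) (int b) = int (mlt a b c)"
  unfolding Mk_alt by (auto simp: nat_diff_distrib)

lemma Mk_sym: "Mk k a b = Mk k b a"
proof (cases "a \<ge> 0 \<and> b \<ge> 0 \<and> a + b \<le> int k")
  case True
  then obtain a' b' c' where "a = int a'" "b = int b'" "a' + b' + c' = k"
  proof -
    assume r: "\<And>a' b' c'. a = int a' \<Longrightarrow> b = int b' \<Longrightarrow> a' + b' + c' = k \<Longrightarrow> thesis"
    show thesis by (rule r[of "nat a" "nat b" "nat (int k - a - b)"]) (use True in auto)
  qed
  then show ?thesis using Mk_nat[of a' b' c' k] Mk_nat[of b' a' c' k] by (simp add: mlt_sym ac_simps)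
next
  case False
  then show ?thesis using Mk_zero[of a b k] Mk_zero[of b a k] by auto
qed

lemma Mk_pascal: "Mk (Suc k) a b = Mk k (a-1) b + Mk k a b + Mk k a (b-1)"
proof (cases "a \<ge> 0 \<and> b \<ge> 0 \<and> a + b \<le> int k + 1")
  case True
  then obtain a' b' c' where ab: "a = int a'" "b = int b'" and e: "a' + b' + c' = Suc k"
  proof -
    assume r: "\<And>a' b' c'. a = int a' \<Longrightarrow> b = int b' \<Longrightarrow> a' + b' + c' = Suc k \<Longrightarrow> thesis"
    show thesis by (rule r[of "nat a" "nat b" "nat (int k + 1 - a - b)"]) (use True in auto)
  qed
  note P = mlt_pascal[OF e]
  have L: "Mk (Suc k) a b = int (mlt a' b' c')" using Mk_nat[OF e] ab by simp
  have A: "Mk k (a-1) b = (if a' > 0 then int (mlt (a' - 1) b' c') else 0)"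
  proof (cases a')
    case 0 then show ?thesis using ab Mk_zero by simp
  next
    case (Suc x) then show ?thesis using ab Mk_nat[of x b' c' k] e by simp
  qed
  have B: "Mk k a (b-1) = (if b' > 0 then int (mlt a' (b' - 1) c') else 0)"
  proof (cases b')
    case 0 then show ?thesis using ab Mk_zero by simp
  next
    case (Suc x) then show ?thesis using ab Mk_nat[of a' x c' k] e by simp
  qed
  have C: "Mk k a b = (if c' > 0 then int (mlt a' b' (c' - 1)) else 0)"
  proof (cases c')
    case 0 then show ?thesis using ab Mk_zero[of a b k] e by simp
  next
    case (Suc x) then show ?thesis using ab Mk_nat[of a' b' x k] e by simp
  qed
  show ?thesis unfolding L A B C P by simp
next
  case False
  then show ?thesis using Mk_zero[of a b] Mk_zero[of "a-1" b k] Mk_zero[of a b k] Mk_zero[of a "b-1" k]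
    by auto
qed



definition F :: "nat \<Rightarrow> nat \<Rightarrow> int \<Rightarrow> int \<Rightarrow> int \<Rightarrow> int" where
  "F n k x u d = (if 0 \<le> x + u - d \<and> x + u - d < int n then
     Mk k u d - Mk k (d - x - 1) (u + x + 1) - Mk k (d + int n - x) (u - int n + x) else 0)"

lemma F_rec: "F n (Suc k) x u d = F n k (x+1) (u-1) d + F n k x u d + F n k (x-1) u (d-1)"
proof -
  have a: "Mk (Suc k) (d - x - 1) (u + x + 1) = Mk k (d - (x+1) - 1) (u - 1 + (x+1) + 1)
     + Mk k (d - x - 1) (u + x + 1) + Mk k (d - 1 - (x-1) - 1) (u + (x-1) + 1)"
    by (simp add: Mk_pascal algebra_simps)
  have b: "Mk (Suc k) (d + int n - x) (u - int n + x) = Mk k (d + int n - (x+1)) (u - 1 - int n + (x+1))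
     + Mk k (d + int n - x) (u - int n + x) + Mk k (d - 1 + int n - (x-1)) (u - int n + (x-1))"
    by (simp add: Mk_pascal algebra_simps)
  have c: "Mk (Suc k) u d = Mk k (u-1) d + Mk k u d + Mk k u (d-1)" by (rule Mk_pascal)
  show ?thesis unfolding F_def a b c by (simp add: algebra_simps)
qed

lemma F_big_u: "d \<ge> 0 \<Longrightarrow> u > int k \<Longrightarrow> F n k x u d = 0"
  unfolding F_def by (simp add: Mk_zero)

lemma F_big_d: "u \<ge> 0 \<Longrightarrow> d > int k \<Longrightarrow> F n k x u d = 0"
  unfolding F_def by (simp add: Mk_zero)

lemma F_um1: "0 \<le> x \<Longrightarrow> x \<le> int n \<Longrightarrow> F n k x (-1) d = 0"
  unfolding F_def by (simp add: Mk_zero)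

lemma F_dm1: "-1 \<le> x \<Longrightarrow> F n k x u (-1) = 0"
  unfolding F_def by (simp add: Mk_zero)

lemma F_xm1: "u \<le> int n \<Longrightarrow> F n k (-1) u d = 0"
  unfolding F_def by (simp add: Mk_zero Mk_sym[of k u d])

lemma F_xn: "d \<le> int n \<Longrightarrow> F n k (int n) u d = 0"
  unfolding F_def by (simp add: Mk_zero Mk_sym[of k u d])

definition G :: "nat \<Rightarrow> nat \<Rightarrow> int \<Rightarrow> int" where
  "G n k x = (\<Sum>u\<in>{0..int n}. \<Sum>d\<in>{0..int n}. F n k x u d)"

lemma shift_sum:
  fixes g :: "int \<Rightarrow> int"
  assumes "N \<ge> 0" "g (-1) = 0" "g N = 0"
  shows "(\<Sum>u\<in>{0..N}. g (u-1)) = (\<Sum>u\<in>{0..N}. g u)"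
proof -
  have "(\<Sum>u\<in>{0..N}. g (u-1)) = (\<Sum>v\<in>(\<lambda>u. u-1)`{0..N}. g v)"
    by (subst sum.reindex) (auto simp: inj_on_def)
  also have "\<dots> = (\<Sum>v\<in>{-1..N-1}. g v)" by simp
  also have "{-1..N-1} = insert (-1) {0..N-1}" using assms by auto
  also have "(\<Sum>v\<in>insert (-1) {0..N-1}. g v) = (\<Sum>v\<in>{0..N-1}. g v)" using assms by simp
  also have "\<dots> = (\<Sum>v\<in>insert N {0..N-1}. g v)" using assms by simp
  also have "insert N {0..N-1} = {0..N}" using assms by auto
  finally show ?thesis .
qed

lemma G_m1: "G n k (-1) = 0"
  unfolding G_def by (intro sum.neutral ballI) (simp add: F_xm1)

lemma G_n: "G n k (int n) = 0"
  unfolding G_def by (intro sum.neutral ballI) (simp add: F_xn)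

lemma G_rec:
  assumes "k < n" "0 \<le> x" "x < int n"
  shows "G n (Suc k) x = G n k (x-1) + G n k x + G n k (x+1)"
proof -
  let ?N = "int n"
  have "G n (Suc k) x = (\<Sum>u\<in>{0..?N}. \<Sum>d\<in>{0..?N}. F n k (x+1) (u-1) d)
     + (\<Sum>u\<in>{0..?N}. \<Sum>d\<in>{0..?N}. F n k x u d) + (\<Sum>u\<in>{0..?N}. \<Sum>d\<in>{0..?N}. F n k (x-1) u (d-1))"
    unfolding G_def F_rec by (simp add: sum.distrib)
  also have "(\<Sum>u\<in>{0..?N}. \<Sum>d\<in>{0..?N}. F n k (x+1) (u-1) d) = G n k (x+1)"
    unfolding G_def
    by (rule shift_sum[where g = "\<lambda>u. \<Sum>d\<in>{0..?N}. F n k (x+1) u d"])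
       (use assms in \<open>auto intro!: sum.neutral simp: F_um1 F_big_u\<close>)
  also have "(\<Sum>u\<in>{0..?N}. \<Sum>d\<in>{0..?N}. F n k (x-1) u (d-1)) = G n k (x-1)"
    unfolding G_def
    by (intro sum.cong refl shift_sum[where g = "\<lambda>d. F n k (x-1) _ d"])
       (use assms in \<open>auto simp: F_dm1 F_big_d\<close>)
  finally show ?thesis unfolding G_def by simp
qed

lemma Mk0: "Mk 0 u d = (if u = 0 \<and> d = 0 then 1 else 0)"
  unfolding Mk_alt by (auto simp: mlt_def)

lemma G0: "0 \<le> x \<Longrightarrow> x < int n \<Longrightarrow> G n 0 x = 1"
proof -
  assume x: "0 \<le> x" "x < int n"
  have "G n 0 x = (\<Sum>u\<in>{0..int n}. \<Sum>d\<in>{0..int n}. if u = 0 \<and> d = 0 then 1 else 0)"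
    unfolding G_def F_def Mk0 using x by (intro sum.cong refl) auto
  also have "\<dots> = (\<Sum>u\<in>{0..int n}. if u = 0 then 1 else 0)"
  proof (intro sum.cong refl)
    fix u show "(\<Sum>d\<in>{0..int n}. if u = 0 \<and> d = 0 then 1 else 0) = (if u = 0 then 1 else (0::int))"
      using x by (cases "u = 0") simp_all
  qed
  also have "\<dots> = 1" using x by simp
  finally show ?thesis .
qed



lemma edge_iff: "{a,b} \<in> path_edges n \<longleftrightarrow> (b = Suc a \<and> Suc a < n) \<or> (a = Suc b \<and> Suc b < n)"
  unfolding path_edges_def by (auto simp: doubleton_eq_iff)

definition adj :: "nat \<Rightarrow> nat \<Rightarrow> bool" where
  "adj a b \<longleftrightarrow> b = a \<or> b = Suc a \<or> a = Suc b"

lemma WHom_iff: "f \<in> WHom j m n \<longleftrightarrow> f \<in> {0..<m} \<rightarrow>\<^sub>E {0..<n} \<and> f 0 = j \<and>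
   (\<forall>i. Suc i < m \<longrightarrow> adj (f i) (f (Suc i)))"
proof -
  have "(\<forall>x y. {x, y} \<in> path_edges m \<longrightarrow> f x = f y \<or> {f x, f y} \<in> path_edges n) \<longleftrightarrow>
        (\<forall>i. Suc i < m \<longrightarrow> adj (f i) (f (Suc i)))" if f: "f \<in> {0..<m} \<rightarrow>\<^sub>E {0..<n}"
  proof
    assume h: "\<forall>x y. {x, y} \<in> path_edges m \<longrightarrow> f x = f y \<or> {f x, f y} \<in> path_edges n"
    show "\<forall>i. Suc i < m \<longrightarrow> adj (f i) (f (Suc i))"
    proof (intro allI impI)
      fix i assume "Suc i < m"
      then have "{i, Suc i} \<in> path_edges m" by (simp add: edge_iff)
      then show "adj (f i) (f (Suc i))" using h unfolding adj_def edge_iff by metis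
    qed
  next
    assume h: "\<forall>i. Suc i < m \<longrightarrow> adj (f i) (f (Suc i))"
    show "\<forall>x y. {x, y} \<in> path_edges m \<longrightarrow> f x = f y \<or> {f x, f y} \<in> path_edges n"
    proof (intro allI impI)
      fix x y assume "{x, y} \<in> path_edges m"
      then have "(y = Suc x \<and> Suc x < m) \<or> (x = Suc y \<and> Suc y < m)" by (simp add: edge_iff)
      then show "f x = f y \<or> {f x, f y} \<in> path_edges n"
      proof
        assume a: "y = Suc x \<and> Suc x < m"
        then have "f y < n" "f x < n" using f by auto
        then show ?thesis using h a unfolding adj_def edge_iff by auto
      next
        assume a: "x = Suc y \<and> Suc y < m"
        then have "f y < n" "f x < n" using f by auto
        then show ?thesis using h a unfolding adj_def edge_iff by auto
      qed
    qed
  qed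
  then show ?thesis unfolding WHom_def weak_hom_def path_verts_def by auto
qed

lemma WHom_finite: "finite (WHom j m n)"
proof (rule finite_subset)
  show "WHom j m n \<subseteq> {0..<m} \<rightarrow>\<^sub>E {0..<n}" using WHom_iff by blast
qed (simp add: finite_PiE)

lemma WHom_one: "j < n \<Longrightarrow> WHom j (Suc 0) n = {\<lambda>i. if i = 0 then j else undefined}"
proof (intro set_eqI iffI)
  fix f :: "nat \<Rightarrow> nat" assume "f \<in> WHom j (Suc 0) n"
  then show "f \<in> {\<lambda>i. if i = 0 then j else undefined}"
    by (auto simp: WHom_iff PiE_def extensional_def fun_eq_iff)
next
  fix f :: "nat \<Rightarrow> nat" assume "j < n" "f \<in> {\<lambda>i. if i = 0 then j else undefined}"
  then show "f \<in> WHom j (Suc 0) n" by (auto simp: WHom_iff PiE_def extensional_def)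
qed

lemma card_one: "j < n \<Longrightarrow> card (WHom j (Suc 0) n) = 1"
  by (simp add: WHom_one)

lemma card_slice:
  assumes "y < n" "j < n"
  shows "card {f \<in> WHom j (Suc (Suc k)) n. f (Suc 0) = y} = (if adj j y then card (WHom y (Suc k) n) else 0)"
proof (cases "adj j y")
  case False
  have "f (Suc 0) \<noteq> y" if f: "f \<in> WHom j (Suc (Suc k)) n" for f
  proof -
    from f have "\<forall>i. Suc i < Suc (Suc k) \<longrightarrow> adj (f i) (f (Suc i))" "f 0 = j" by (simp_all add: WHom_iff)
    then have "adj j (f (Suc 0))" by auto
    then show ?thesis using False by auto
  qed
  then have E: "{f \<in> WHom j (Suc (Suc k)) n. f (Suc 0) = y} = {}" by auto
  show ?thesis unfolding E using False by simp
next
  case True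
  let ?A = "{f \<in> WHom j (Suc (Suc k)) n. f (Suc 0) = y}"
  let ?B = "WHom y (Suc k) n"
  define sh :: "(nat \<Rightarrow> nat) \<Rightarrow> nat \<Rightarrow> nat" where "sh f = (\<lambda>i. if i < Suc k then f (Suc i) else undefined)" for f
  define ex :: "(nat \<Rightarrow> nat) \<Rightarrow> nat \<Rightarrow> nat" where "ex g = (\<lambda>i. if i = 0 then j else if i < Suc (Suc k) then g (i - 1) else undefined)" for g
  have jn: "j < n" if "f \<in> ?A" for f using that by (auto simp: WHom_iff)
  have "bij_betw sh ?A ?B"
  proof (rule bij_betw_byWitness[where f' = ex])
    show "\<forall>a\<in>?A. ex (sh a) = a"
    proof
      fix f assume f: "f \<in> ?A"
      show "ex (sh f) = f"
      proof
        fix i show "ex (sh f) i = f i"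
          using f by (cases i) (auto simp: ex_def sh_def WHom_iff PiE_def extensional_def)
      qed
    qed
    show "\<forall>a'\<in>?B. sh (ex a') = a'"
    proof
      fix g assume g: "g \<in> ?B"
      show "sh (ex g) = g"
      proof
        fix i show "sh (ex g) i = g i"
          using g by (auto simp: ex_def sh_def WHom_iff PiE_def extensional_def)
      qed
    qed
    show "sh ` ?A \<subseteq> ?B"
    proof
      fix g assume "g \<in> sh ` ?A"
      then obtain f where f: "f \<in> ?A" and g: "g = sh f" by auto
      show "g \<in> ?B" using f unfolding g WHom_iff sh_def by (auto simp: PiE_def extensional_def Pi_def)
    qed
    show "ex ` ?B \<subseteq> ?A"
    proof
      fix f assume "f \<in> ex ` ?B"
      then obtain g where g: "g \<in> ?B" and f: "f = ex g" by auto
      have "\<forall>i. Suc i < Suc (Suc k) \<longrightarrow> adj (f i) (f (Suc i))"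
      proof (intro allI impI)
        fix i assume "Suc i < Suc (Suc k)"
        then show "adj (f i) (f (Suc i))" using g True unfolding f ex_def WHom_iff
          by (cases i) auto
      qed
      moreover have "f \<in> {0..<Suc (Suc k)} \<rightarrow>\<^sub>E {0..<n}"
        using g True assms unfolding f ex_def WHom_iff adj_def by (auto simp: PiE_def extensional_def Pi_def)
      ultimately show "f \<in> ?A" using g unfolding f WHom_iff by (auto simp: ex_def)
    qed
  qed
  then show ?thesis using True by (simp add: bij_betw_same_card)
qed

lemma card_step:
  assumes "j < n"
  shows "card (WHom j (Suc (Suc k)) n) = (\<Sum>y\<in>{0..<n}. if adj j y then card (WHom y (Suc k) n) else 0)"
proof -
  have "WHom j (Suc (Suc k)) n = (\<Union>y\<in>{0..<n}. {f \<in> WHom j (Suc (Suc k)) n. f (Suc 0) = y})"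
    by (auto simp: WHom_iff PiE_def Pi_def)
  moreover have "card (\<Union>y\<in>{0..<n}. {f \<in> WHom j (Suc (Suc k)) n. f (Suc 0) = y}) = (\<Sum>y\<in>{0..<n}. card {f \<in> WHom j (Suc (Suc k)) n. f (Suc 0) = y})"
    by (rule card_UN_disjoint) (auto simp: WHom_finite)
  ultimately have "card (WHom j (Suc (Suc k)) n) = (\<Sum>y\<in>{0..<n}. card {f \<in> WHom j (Suc (Suc k)) n. f (Suc 0) = y})"
    by simp
  also have "\<dots> = (\<Sum>y\<in>{0..<n}. if adj j y then card (WHom y (Suc k) n) else 0)"
    by (intro sum.cong refl) (simp add: card_slice assms)
  finally show ?thesis .
qed

definition cnt :: "nat \<Rightarrow> nat \<Rightarrow> int \<Rightarrow> int" where
  "cnt n k x = (if 0 \<le> x \<and> x < int n then int (card (WHom (nat x) (Suc k) n)) else 0)"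

lemma cnt0: "0 \<le> x \<Longrightarrow> x < int n \<Longrightarrow> cnt n 0 x = 1"
  unfolding cnt_def by (simp add: card_one)

lemma cnt_int: "cnt n k (int i) = (if i < n then int (card (WHom i (Suc k) n)) else 0)"
  unfolding cnt_def by simp

lemma cnt_m1: "cnt n k (-1) = 0"
  unfolding cnt_def by simp

lemma sum_adj:
  fixes h :: "nat \<Rightarrow> nat"
  assumes "j < n"
  shows "(\<Sum>y\<in>{0..<n}. if adj j y then h y else 0) =
     h j + (if 0 < j then h (j - 1) else 0) + (if Suc j < n then h (Suc j) else 0)"
proof -
  have "(\<Sum>y\<in>{0..<n}. if adj j y then h y else 0) = (\<Sum>y\<in>{y\<in>{0..<n}. adj j y}. h y)"
    by (rule sum.inter_filter[symmetric]) simp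
  also have "{y\<in>{0..<n}. adj j y} = {j} \<union> (if 0 < j then {j - 1} else {}) \<union> (if Suc j < n then {Suc j} else {})"
    using assms by (auto simp: adj_def)
  also have "(\<Sum>y\<in>\<dots>. h y) = h j + (if 0 < j then h (j - 1) else 0) + (if Suc j < n then h (Suc j) else 0)"
    by (cases j) auto
  finally show ?thesis .
qed

lemma cnt_rec:
  assumes "0 \<le> x" "x < int n"
  shows "cnt n (Suc k) x = cnt n k (x-1) + cnt n k x + cnt n k (x+1)"
proof -
  define j where "j = nat x"
  have x: "x = int j" "j < n" using assms j_def by auto
  have "cnt n (Suc k) x = int (card (WHom j (Suc (Suc k)) n))" using x unfolding cnt_def by simp
  also have "\<dots> = int (card (WHom j (Suc k) n)) + (if 0 < j then int (card (WHom (j-1) (Suc k) n)) else 0)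
        + (if Suc j < n then int (card (WHom (Suc j) (Suc k) n)) else 0)"
    using x by (simp add: card_step sum_adj)
  also have "\<dots> = cnt n k (x-1) + cnt n k x + cnt n k (x+1)"
  proof (cases j)
    case 0
    have "cnt n k 0 = int (card (WHom 0 (Suc k) n))" "cnt n k 1 = (if Suc 0 < n then int (card (WHom (Suc 0) (Suc k) n)) else 0)"
      using cnt_int[of n k 0] cnt_int[of n k "Suc 0"] x by simp_all
    then show ?thesis using x 0 by (simp add: cnt_m1)
  next
    case (Suc i)
    have "x - 1 = int i" "x + 1 = int (Suc j)" using x Suc by auto
    then have "cnt n k (x-1) = int (card (WHom i (Suc k) n))" "cnt n k (x+1) = (if Suc j < n then int (card (WHom (Suc j) (Suc k) n)) else 0)"
      using cnt_int[of n k i] cnt_int[of n k "Suc j"] x Suc by simp_all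
    moreover have "cnt n k x = int (card (WHom j (Suc k) n))" using cnt_int[of n k j] x by simp
    ultimately show ?thesis using x Suc by simp
  qed
  finally show ?thesis .
qed



lemma Mk_z1: "a < 0 \<Longrightarrow> Mk k a b = 0" by (simp add: Mk_zero)
lemma Mk_z2: "b < 0 \<Longrightarrow> Mk k a b = 0" by (simp add: Mk_zero)
lemma Mk_z3: "a + b > int k \<Longrightarrow> Mk k a b = 0" by (simp add: Mk_zero)

lemma le_div2: "2 * a \<le> (b::int) \<Longrightarrow> a \<le> b div 2" by presburger

lemma pointwise:
  fixes M N J u d :: int
  assumes J0: "0 \<le> J" and JN: "J < N" and M: "M = int k + 1" and MN: "M \<le> N" and N: "N = int n"
    and u0: "0 \<le> u" and d0: "0 \<le> d"
  shows "(if J+1 \<le> d \<and> d \<le> J + (M - J - 1) div 2 \<and> d - J \<le> u \<and> u \<le> M - 1 - d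
            then Mk k u d - Mk k (d-J-1) (u+J+1) else 0)
       + (if max (J - N + M + 1) 0 \<le> d \<and> d \<le> J \<and> 0 \<le> u \<and> u \<le> M - 1 - d then Mk k u d else 0)
       + (if 0 \<le> d \<and> d \<le> J - N + M \<and> 0 \<le> u \<and> u \<le> N - J - 1 then Mk k u d else 0)
       + (if N - J \<le> u \<and> u \<le> N - J - 1 + (J - N + M) div 2 \<and> u - (N - J - 1) \<le> d \<and> d \<le> M - 1 - u
            then Mk k d u - Mk k (u-N+J) (d+N-J) else 0)
       = F n k J u d"
proof -
  have K: "M - 1 = int k" using M by simp
  consider (a) "u + d > int k" | (b1) "u+d \<le> int k" "d > J" | (b2) "u+d \<le> int k" "d \<le> J" "u \<le> N-J-1"
    | (b3) "u+d \<le> int k" "d \<le> J" "u \<ge> N-J" by linarith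
  then show ?thesis
  proof cases
    case a
    have c1: "(J+1 \<le> d \<and> d \<le> J + (M - J - 1) div 2 \<and> d - J \<le> u \<and> u \<le> M - 1 - d) = False" using a K by (-, (intro iffI; (elim conjE)?; (linarith|simp)))
    have c2: "(max (J - N + M + 1) 0 \<le> d \<and> d \<le> J \<and> 0 \<le> u \<and> u \<le> M - 1 - d) = False" using a K by (-, (intro iffI; (elim conjE)?; (linarith|simp)))
    have c3: "(0 \<le> d \<and> d \<le> J - N + M \<and> 0 \<le> u \<and> u \<le> N - J - 1) = False" using a K by (-, (intro iffI; (elim conjE)?; (linarith|simp)))
    have c4: "(N - J \<le> u \<and> u \<le> N - J - 1 + (J - N + M) div 2 \<and> u - (N - J - 1) \<le> d \<and> d \<le> M - 1 - u) = False" using a K by (-, (intro iffI; (elim conjE)?; (linarith|simp)))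
    show ?thesis unfolding c1 c2 c3 c4 F_def using a by (simp add: Mk_z3)
  next
    case b1
    have c2: "(max (J - N + M + 1) 0 \<le> d \<and> d \<le> J \<and> 0 \<le> u \<and> u \<le> M - 1 - d) = False" using b1 by (-, (intro iffI; (elim conjE)?; (linarith|simp)))
    have c3: "(0 \<le> d \<and> d \<le> J - N + M \<and> 0 \<le> u \<and> u \<le> N - J - 1) = False" using b1 MN by (-, (intro iffI; (elim conjE)?; (linarith|simp)))
    have c4: "(N - J \<le> u \<and> u \<le> N - J - 1 + (J - N + M) div 2 \<and> u - (N - J - 1) \<le> d \<and> d \<le> M - 1 - u) = False" using b1 K MN by (-, (intro iffI; (elim conjE)?; (linarith|simp)))
    have z: "Mk k (d + int n - J) (u - int n + J) = 0" using b1 K MN N by (intro Mk_z2) linarith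
    show ?thesis
    proof (cases "d - J \<le> u")
      case True
      have "d - J \<le> (M - J - 1) div 2" using True b1 K by (intro le_div2) simp
      then have c1: "(J+1 \<le> d \<and> d \<le> J + (M - J - 1) div 2 \<and> d - J \<le> u \<and> u \<le> M - 1 - d) = True"
        using b1 True K by auto
      have "J + u - d < int n" using b1 K MN N d0 by linarith
      then show ?thesis unfolding c1 c2 c3 c4 F_def z using b1 True by auto
    next
      case False
      have c1: "(J+1 \<le> d \<and> d \<le> J + (M - J - 1) div 2 \<and> d - J \<le> u \<and> u \<le> M - 1 - d) = False"
        using False by (-, (intro iffI; (elim conjE)?; (linarith|simp)))
      show ?thesis unfolding c1 c2 c3 c4 F_def using False by auto
    qed
  next
    case b2
    have c1: "(J+1 \<le> d \<and> d \<le> J + (M - J - 1) div 2 \<and> d - J \<le> u \<and> u \<le> M - 1 - d) = False" using b2 by (-, (intro iffI; (elim conjE)?; (linarith|simp)))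
    have c4: "(N - J \<le> u \<and> u \<le> N - J - 1 + (J - N + M) div 2 \<and> u - (N - J - 1) \<le> d \<and> d \<le> M - 1 - u) = False" using b2 by (-, (intro iffI; (elim conjE)?; (linarith|simp)))
    have z: "Mk k (d + int n - J) (u - int n + J) = 0" using b2 N by (intro Mk_z2) linarith
    have z2: "Mk k (d - J - 1) (u + J + 1) = 0" using b2 by (intro Mk_z1) linarith
    have F: "F n k J u d = Mk k u d" unfolding F_def z z2 using b2 N u0 d0 J0 by auto
    show ?thesis
    proof (cases "d \<le> J - N + M")
      case True
      have c2: "(max (J - N + M + 1) 0 \<le> d \<and> d \<le> J \<and> 0 \<le> u \<and> u \<le> M - 1 - d) = False" using True by (-, (intro iffI; (elim conjE)?; (linarith|simp)))
      have c3: "(0 \<le> d \<and> d \<le> J - N + M \<and> 0 \<le> u \<and> u \<le> N - J - 1) = True" using True b2 u0 d0 by auto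
      show ?thesis unfolding c1 c2 c3 c4 F by simp
    next
      case False
      have c2: "(max (J - N + M + 1) 0 \<le> d \<and> d \<le> J \<and> 0 \<le> u \<and> u \<le> M - 1 - d) = True" using False b2 u0 d0 K by auto
      have c3: "(0 \<le> d \<and> d \<le> J - N + M \<and> 0 \<le> u \<and> u \<le> N - J - 1) = False" using False by (-, (intro iffI; (elim conjE)?; (linarith|simp)))
      show ?thesis unfolding c1 c2 c3 c4 F by simp
    qed
  next
    case b3
    have c1: "(J+1 \<le> d \<and> d \<le> J + (M - J - 1) div 2 \<and> d - J \<le> u \<and> u \<le> M - 1 - d) = False" using b3 by (-, (intro iffI; (elim conjE)?; (linarith|simp)))
    have c2: "(max (J - N + M + 1) 0 \<le> d \<and> d \<le> J \<and> 0 \<le> u \<and> u \<le> M - 1 - d) = False" using b3 K by (-, (intro iffI; (elim conjE)?; (linarith|simp)))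
    have c3: "(0 \<le> d \<and> d \<le> J - N + M \<and> 0 \<le> u \<and> u \<le> N - J - 1) = False" using b3 by (-, (intro iffI; (elim conjE)?; (linarith|simp)))
    have z2: "Mk k (d - J - 1) (u + J + 1) = 0" using b3 K MN by (intro Mk_z1) linarith
    show ?thesis
    proof (cases "u - (N - J - 1) \<le> d")
      case True
      have "u - (N - J - 1) \<le> (J - N + M) div 2" using True b3 K by (intro le_div2) simp
      then have c4: "(N - J \<le> u \<and> u \<le> N - J - 1 + (J - N + M) div 2 \<and> u - (N - J - 1) \<le> d \<and> d \<le> M - 1 - u) = True"
        using b3 True K by auto
      have e1: "0 \<le> J + u - d" using b3 u0 by linarith
      have e2: "J + u - d < int n" using True N by linarith
      have FF: "F n k J u d = Mk k u d - Mk k (d + int n - J) (u - int n + J)"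
        unfolding F_def z2 using e1 e2 by simp
      have s: "Mk k (d + int n - J) (u - int n + J) = Mk k (u-N+J) (d+N-J)"
        using N Mk_sym[of k "u-N+J" "d+N-J"] by (simp add: algebra_simps)
      show ?thesis unfolding c1 c2 c3 c4 FF s using Mk_sym[of k d u] by simp
    next
      case False
      have c4: "(N - J \<le> u \<and> u \<le> N - J - 1 + (J - N + M) div 2 \<and> u - (N - J - 1) \<le> d \<and> d \<le> M - 1 - u) = False"
        using False by (-, (intro iffI; (elim conjE)?; (linarith|simp)))
      show ?thesis unfolding c1 c2 c3 c4 F_def using False N by auto
    qed
  qed
qed



lemma div2_le: "2 * ((b::int) div 2) \<le> b" by presburger

lemma box:
  fixes h :: "int \<Rightarrow> int \<Rightarrow> int" and c e :: "int \<Rightarrow> int"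
  assumes t0: "\<And>t. a \<le> t \<Longrightarrow> t \<le> b \<Longrightarrow> 0 \<le> t"
    and tN: "\<And>t. a \<le> t \<Longrightarrow> t \<le> b \<Longrightarrow> t \<le> N"
    and s0: "\<And>t s. a \<le> t \<Longrightarrow> t \<le> b \<Longrightarrow> c t \<le> s \<Longrightarrow> s \<le> e t \<Longrightarrow> 0 \<le> s"
    and sN: "\<And>t s. a \<le> t \<Longrightarrow> t \<le> b \<Longrightarrow> c t \<le> s \<Longrightarrow> s \<le> e t \<Longrightarrow> s \<le> N"
  shows "(\<Sum>t\<in>{a..b}. \<Sum>s\<in>{c t..e t}. h t s) =
    (\<Sum>t\<in>{0..N}. \<Sum>s\<in>{0..N}. if a \<le> t \<and> t \<le> b \<and> c t \<le> s \<and> s \<le> e t then h t s else 0)"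
proof -
  have inner: "(\<Sum>s\<in>{c t..e t}. h t s) = (\<Sum>s\<in>{0..N}. if a \<le> t \<and> t \<le> b \<and> c t \<le> s \<and> s \<le> e t then h t s else 0)"
    if "a \<le> t" "t \<le> b" for t
  proof -
    have "(\<Sum>s\<in>{0..N}. if a \<le> t \<and> t \<le> b \<and> c t \<le> s \<and> s \<le> e t then h t s else 0)
        = (\<Sum>s\<in>{s\<in>{0..N}. a \<le> t \<and> t \<le> b \<and> c t \<le> s \<and> s \<le> e t}. h t s)"
      by (rule sum.inter_filter[symmetric]) simp
    also have "{s\<in>{0..N}. a \<le> t \<and> t \<le> b \<and> c t \<le> s \<and> s \<le> e t} = {c t..e t}"
      using s0[OF that] sN[OF that] that by auto
    finally show ?thesis by simp
  qed
  have "(\<Sum>t\<in>{0..N}. if a \<le> t \<and> t \<le> b then (\<Sum>s\<in>{c t..e t}. h t s) else 0)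
      = (\<Sum>t\<in>{t\<in>{0..N}. a \<le> t \<and> t \<le> b}. \<Sum>s\<in>{c t..e t}. h t s)"
    by (rule sum.inter_filter[symmetric]) simp
  also have "{t\<in>{0..N}. a \<le> t \<and> t \<le> b} = {a..b}" using t0 tN by auto
  finally have outer: "(\<Sum>t\<in>{a..b}. \<Sum>s\<in>{c t..e t}. h t s) =
      (\<Sum>t\<in>{0..N}. if a \<le> t \<and> t \<le> b then (\<Sum>s\<in>{c t..e t}. h t s) else 0)" by simp
  show ?thesis unfolding outer
    by (intro sum.cong refl) (auto simp: inner intro!: sum.neutral)
qed

lemma G_cnt: "k < n \<Longrightarrow> 0 \<le> x \<Longrightarrow> x < int n \<Longrightarrow> G n k x = cnt n k x"
proof (induction k arbitrary: x)
  case 0 then show ?case by (simp add: G0 cnt0)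
next
  case (Suc k)
  have IH: "\<And>y. 0 \<le> y \<Longrightarrow> y < int n \<Longrightarrow> G n k y = cnt n k y" using Suc by simp
  have a: "G n k (x-1) = cnt n k (x-1)"
  proof (cases "x = 0")
    case True then show ?thesis by (simp add: G_m1 cnt_m1)
  next
    case False then show ?thesis using Suc.prems by (intro IH) auto
  qed
  have b: "G n k (x+1) = cnt n k (x+1)"
  proof (cases "x + 1 = int n")
    case True then show ?thesis using G_n[of n k] cnt_int[of n k n] by simp
  next
    case False then show ?thesis using Suc.prems by (intro IH) auto
  qed
  have "G n (Suc k) x = G n k (x-1) + G n k x + G n k (x+1)"
    using Suc.prems by (intro G_rec) auto
  also have "\<dots> = cnt n k (x-1) + cnt n k x + cnt n k (x+1)" using a b IH Suc.prems by simp
  also have "\<dots> = cnt n (Suc k) x" using Suc.prems by (simp add: cnt_rec)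
  finally show ?case .
qed

lemma final:
  fixes M N J :: int
  assumes kn: "k < n" and jn: "j < n" and M: "M = int k + 1" and N: "N = int n" and J: "J = int j"
  shows "G n k J = (\<Sum>t\<in>{J+1 .. J + (M - J - 1) div 2}. \<Sum>s\<in>{t - J .. M - 1 - t}.
          multinom (M-1) s t (M-1-s-t) - multinom (M-1) (t-J-1) (s+J+1) (M-1-s-t))
    + (\<Sum>t\<in>{max (J - N + M + 1) 0 .. J}. \<Sum>s\<in>{0 .. M - 1 - t}. multinom (M-1) s t (M-1-s-t))
    + (\<Sum>t\<in>{0 .. J - N + M}. \<Sum>s\<in>{0 .. N - J - 1}. multinom (M-1) s t (M-1-s-t))
    + (\<Sum>t\<in>{N - J .. N - J - 1 + (J - N + M) div 2}. \<Sum>s\<in>{t - (N - J - 1) .. M - 1 - t}.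
          multinom (M-1) s t (M-1-s-t) - multinom (M-1) (t-N+J) (s+N-J) (M-1-s-t))"
proof -
  have K: "M - 1 = int k" using M by simp
  have J0: "0 \<le> J" and JN: "J < N" and MN: "M \<le> N" and M1: "1 \<le> M" using assms by auto
  have mk: "\<And>a b c. c = M - 1 - a - b \<Longrightarrow> multinom (M-1) a b c = Mk k a b" using K by (simp add: Mk_def)
  have T1: "(\<Sum>t\<in>{J+1 .. J + (M - J - 1) div 2}. \<Sum>s\<in>{t - J .. M - 1 - t}.
          multinom (M-1) s t (M-1-s-t) - multinom (M-1) (t-J-1) (s+J+1) (M-1-s-t)) = (\<Sum>t\<in>{0..N}. \<Sum>s\<in>{0..N}. if J+1 \<le> t \<and> t \<le> J + (M - J - 1) div 2 \<and> t - J \<le> s \<and> s \<le> M - 1 - t then Mk k s t - Mk k (t-J-1) (s+J+1) else 0)"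
  proof -
    have "(\<Sum>t\<in>{J+1 .. J + (M - J - 1) div 2}. \<Sum>s\<in>{t - J .. M - 1 - t}.
          multinom (M-1) s t (M-1-s-t) - multinom (M-1) (t-J-1) (s+J+1) (M-1-s-t)) = (\<Sum>t\<in>{J+1 .. J + (M - J - 1) div 2}. \<Sum>s\<in>{t - J .. M - 1 - t}.
          Mk k s t - Mk k (t-J-1) (s+J+1))"
      by (intro sum.cong refl) (simp add: mk)
    also have "\<dots> = (\<Sum>t\<in>{0..N}. \<Sum>s\<in>{0..N}. if J+1 \<le> t \<and> t \<le> J + (M - J - 1) div 2 \<and> t - J \<le> s \<and> s \<le> M - 1 - t then Mk k s t - Mk k (t-J-1) (s+J+1) else 0)" by (rule box) (use J0 JN MN M1 div2_le[of "M-J-1"] div2_le[of "J-N+M"] in linarith)+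
    finally show ?thesis .
  qed
  have T2: "(\<Sum>t\<in>{max (J - N + M + 1) 0 .. J}. \<Sum>s\<in>{0 .. M - 1 - t}. multinom (M-1) s t (M-1-s-t)) = (\<Sum>t\<in>{0..N}. \<Sum>s\<in>{0..N}. if max (J - N + M + 1) 0 \<le> t \<and> t \<le> J \<and> 0 \<le> s \<and> s \<le> M - 1 - t then Mk k s t else 0)"
  proof -
    have "(\<Sum>t\<in>{max (J - N + M + 1) 0 .. J}. \<Sum>s\<in>{0 .. M - 1 - t}. multinom (M-1) s t (M-1-s-t)) = (\<Sum>t\<in>{max (J - N + M + 1) 0 .. J}. \<Sum>s\<in>{0 .. M - 1 - t}. Mk k s t)"
      by (intro sum.cong refl) (simp add: mk)
    also have "\<dots> = (\<Sum>t\<in>{0..N}. \<Sum>s\<in>{0..N}. if max (J - N + M + 1) 0 \<le> t \<and> t \<le> J \<and> 0 \<le> s \<and> s \<le> M - 1 - t then Mk k s t else 0)" by (rule box) (use J0 JN MN M1 div2_le[of "M-J-1"] div2_le[of "J-N+M"] in linarith)+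
    finally show ?thesis .
  qed
  have T3: "(\<Sum>t\<in>{0 .. J - N + M}. \<Sum>s\<in>{0 .. N - J - 1}. multinom (M-1) s t (M-1-s-t)) = (\<Sum>t\<in>{0..N}. \<Sum>s\<in>{0..N}. if 0 \<le> t \<and> t \<le> J - N + M \<and> 0 \<le> s \<and> s \<le> N - J - 1 then Mk k s t else 0)"
  proof -
    have "(\<Sum>t\<in>{0 .. J - N + M}. \<Sum>s\<in>{0 .. N - J - 1}. multinom (M-1) s t (M-1-s-t)) = (\<Sum>t\<in>{0 .. J - N + M}. \<Sum>s\<in>{0 .. N - J - 1}. Mk k s t)"
      by (intro sum.cong refl) (simp add: mk)
    also have "\<dots> = (\<Sum>t\<in>{0..N}. \<Sum>s\<in>{0..N}. if 0 \<le> t \<and> t \<le> J - N + M \<and> 0 \<le> s \<and> s \<le> N - J - 1 then Mk k s t else 0)" by (rule box) (use J0 JN MN M1 div2_le[of "M-J-1"] div2_le[of "J-N+M"] in linarith)+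
    finally show ?thesis .
  qed
  have T4: "(\<Sum>t\<in>{N - J .. N - J - 1 + (J - N + M) div 2}. \<Sum>s\<in>{t - (N - J - 1) .. M - 1 - t}.
          multinom (M-1) s t (M-1-s-t) - multinom (M-1) (t-N+J) (s+N-J) (M-1-s-t)) = (\<Sum>t\<in>{0..N}. \<Sum>s\<in>{0..N}. if N - J \<le> s \<and> s \<le> N - J - 1 + (J - N + M) div 2 \<and> s - (N - J - 1) \<le> t \<and> t \<le> M - 1 - s then Mk k t s - Mk k (s-N+J) (t+N-J) else 0)"
  proof -
    have "(\<Sum>t\<in>{N - J .. N - J - 1 + (J - N + M) div 2}. \<Sum>s\<in>{t - (N - J - 1) .. M - 1 - t}.
          multinom (M-1) s t (M-1-s-t) - multinom (M-1) (t-N+J) (s+N-J) (M-1-s-t)) = (\<Sum>t\<in>{N - J .. N - J - 1 + (J - N + M) div 2}. \<Sum>s\<in>{t - (N - J - 1) .. M - 1 - t}.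
          Mk k s t - Mk k (t-N+J) (s+N-J))"
      by (intro sum.cong refl) (simp add: mk)
    also have "\<dots> = (\<Sum>t\<in>{0..N}. \<Sum>s\<in>{0..N}. if N - J \<le> t \<and> t \<le> N - J - 1 + (J - N + M) div 2 \<and> t - (N - J - 1) \<le> s \<and> s \<le> M - 1 - t then Mk k s t - Mk k (t-N+J) (s+N-J) else 0)" by (rule box) (use J0 JN MN M1 div2_le[of "M-J-1"] div2_le[of "J-N+M"] in linarith)+
    also have "\<dots> = (\<Sum>t\<in>{0..N}. \<Sum>s\<in>{0..N}. if N - J \<le> s \<and> s \<le> N - J - 1 + (J - N + M) div 2 \<and> s - (N - J - 1) \<le> t \<and> t \<le> M - 1 - s then Mk k t s - Mk k (s-N+J) (t+N-J) else 0)" by (rule sum.swap)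
    finally show ?thesis .
  qed
  have G: "G n k J = (\<Sum>t\<in>{0..N}. \<Sum>s\<in>{0..N}. F n k J s t)"
    unfolding G_def N by (rule sum.swap)
  have "(\<Sum>t\<in>{0..N}. \<Sum>s\<in>{0..N}. if J+1 \<le> t \<and> t \<le> J + (M - J - 1) div 2 \<and> t - J \<le> s \<and> s \<le> M - 1 - t then Mk k s t - Mk k (t-J-1) (s+J+1) else 0) + (\<Sum>t\<in>{0..N}. \<Sum>s\<in>{0..N}. if max (J - N + M + 1) 0 \<le> t \<and> t \<le> J \<and> 0 \<le> s \<and> s \<le> M - 1 - t then Mk k s t else 0) + (\<Sum>t\<in>{0..N}. \<Sum>s\<in>{0..N}. if 0 \<le> t \<and> t \<le> J - N + M \<and> 0 \<le> s \<and> s \<le> N - J - 1 then Mk k s t else 0) + (\<Sum>t\<in>{0..N}. \<Sum>s\<in>{0..N}. if N - J \<le> s \<and> s \<le> N - J - 1 + (J - N + M) div 2 \<and> s - (N - J - 1) \<le> t \<and> t \<le> M - 1 - s then Mk k t s - Mk k (s-N+J) (t+N-J) else 0) = (\<Sum>t\<in>{0..N}. \<Sum>s\<in>{0..N}. (if J+1 \<le> t \<and> t \<le> J + (M - J - 1) div 2 \<and> t - J \<le> s \<and> s \<le> M - 1 - t then Mk k s t - Mk k (t-J-1) (s+J+1) else 0) + (if max (J - N + M + 1) 0 \<le> t \<and> t \<le> J \<and> 0 \<le> s \<and> s \<le> M - 1 - t then Mk k s t else 0)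
       + (if 0 \<le> t \<and> t \<le> J - N + M \<and> 0 \<le> s \<and> s \<le> N - J - 1 then Mk k s t else 0) + (if N - J \<le> s \<and> s \<le> N - J - 1 + (J - N + M) div 2 \<and> s - (N - J - 1) \<le> t \<and> t \<le> M - 1 - s then Mk k t s - Mk k (s-N+J) (t+N-J) else 0))"
    by (simp add: sum.distrib)
  also have "\<dots> = (\<Sum>t\<in>{0..N}. \<Sum>s\<in>{0..N}. F n k J s t)"
    by (intro sum.cong refl pointwise[OF J0 JN M MN N]) auto
  finally show ?thesis unfolding T1 T2 T3 T4 G by simp
qed


theorem theorem2:
  fixes m n j :: nat
  assumes "0 < m" and "0 < n" and "m \<le> n" and "j < n"
  shows "int (card (WHom j m n)) =
    (let M = int m; N = int n; J = int j in
      (\<Sum>t\<in>{J+1 .. J + (M - J - 1) div 2}. \<Sum>s\<in>{t - J .. M - 1 - t}.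
          multinom (M-1) s t (M-1-s-t) - multinom (M-1) (t-J-1) (s+J+1) (M-1-s-t))
    + (\<Sum>t\<in>{max (J - N + M + 1) 0 .. J}. \<Sum>s\<in>{0 .. M - 1 - t}. multinom (M-1) s t (M-1-s-t))
    + (\<Sum>t\<in>{0 .. J - N + M}. \<Sum>s\<in>{0 .. N - J - 1}. multinom (M-1) s t (M-1-s-t))
    + (\<Sum>t\<in>{N - J .. N - J - 1 + (J - N + M) div 2}. \<Sum>s\<in>{t - (N - J - 1) .. M - 1 - t}.
          multinom (M-1) s t (M-1-s-t) - multinom (M-1) (t-N+J) (s+N-J) (M-1-s-t)))"
proof -
  obtain k where m: "m = Suc k" using assms(1) by (cases m) auto
  have "int (card (WHom j m n)) = cnt n k (int j)" using assms m by (simp add: cnt_int)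
  also have "\<dots> = G n k (int j)" using assms m by (intro G_cnt[symmetric]) auto
  finally have e: "int (card (WHom j m n)) = G n k (int j)" .
  show ?thesis unfolding Let_def e
    by (rule final[where k = k and n = n and j = j]) (use assms m in auto)
qed

end
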